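(* Let $\mathbf{h}\in\mathbb{F}_2^n$ and let $\mathbf{H}$ be the $m\times n$ binary matrix, $1\le m\le n$, whose $r$-th row ($r=1,\ldots,m$) is the cyclic shift of $\mathbf{h}$ to the right by $r-1$ positions. For $1\le\sigma\le n$ let $\Sigma_{\sigma,r}$ be the set of $\sigma$-subsets of columns resolved by row $r$. Then the number of $\sigma$-subsets of columns resolved by $\mathbf{H}$ satisfies $$\Big|\bigcup_{r=1}^m\Sigma_{\sigma,r}\Big|\;\le\; m\,|\Sigma_{\sigma,1}|-\frac{2}{m}\sum_{\kappa=1}^{m-1}(m-\kappa)\,|\Sigma_{\sigma,1}\cap\Sigma_{\sigma,1+\kappa}|.$$
   Context: A row of a binary matrix resolves a set $I$ of column indices if its restriction to the columns in $I$ has Hamming weight exactly one. *)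

theory Defs
  imports Main Complex_Main
begin

text \<open>Binary vectors of length n are modelled as functions nat \<Rightarrow> bool on indices {0..<n}
 (True = 1). Rows and columns are 0-indexed: row r (r = 0..m-1) corresponds to row r+1 of the paper.\<close>

definition shift_row :: "nat \<Rightarrow> (nat \<Rightarrow> bool) \<Rightarrow> nat \<Rightarrow> nat \<Rightarrow> bool" where
  "shift_row n h r j = h (nat ((int j - int r) mod int n))"

definition circ_matrix :: "nat \<Rightarrow> (nat \<Rightarrow> bool) \<Rightarrow> nat \<Rightarrow> nat \<Rightarrow> bool" where
  "circ_matrix n h r j = shift_row n h r j"

definition resolves :: "(nat \<Rightarrow> bool) \<Rightarrow> nat set \<Rightarrow> bool" where
  "resolves row I \<longleftrightarrow> card {j \<in> I. row j} = 1"

definition resolved_sets :: "nat \<Rightarrow> (nat \<Rightarrow> bool) \<Rightarrow> nat \<Rightarrow> nat set set" where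
  "resolved_sets n row \<sigma> = {I. I \<subseteq> {0..<n} \<and> card I = \<sigma> \<and> resolves row I}"

end

theory Submission
  imports Defs "HOL-Number_Theory.Cong"
begin

lemma shift_bij:
  fixes n r :: nat
  assumes "0 < n"
  shows "bij_betw (\<lambda>j. (j + r) mod n) {0..<n} {0..<n}"
proof -
  have inj: "inj_on (\<lambda>j. (j + r) mod n) {0..<n}"
  proof (rule inj_onI)
    fix x y assume x: "x \<in> {0..<n}" and y: "y \<in> {0..<n}" and e: "(x + r) mod n = (y + r) mod n"
    have "x mod n = y mod n" using e using cong_add_rcancel_nat[of x r y n] by (simp add: cong_def)
    then show "x = y" using x y by simp
  qed
  have "(\<lambda>j. (j + r) mod n) ` {0..<n} \<subseteq> {0..<n}" using assms by auto
  then have "(\<lambda>j. (j + r) mod n) ` {0..<n} = {0..<n}" using endo_inj_surj inj by blast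
  then show ?thesis using inj by (simp add: bij_betw_def)
qed

lemma shift_row_shift:
  assumes "0 < n"
  shows "shift_row n h (k + r) ((j + r) mod n) = shift_row n h k j"
proof -
  have "(int ((j + r) mod n) - int (k + r)) mod int n = ((int j + int r) mod int n - (int k + int r)) mod int n"
    by (simp add: zmod_int)
  also have "\<dots> = ((int j + int r) - (int k + int r)) mod int n" by (simp add: mod_diff_left_eq)
  also have "\<dots> = (int j - int k) mod int n" by simp
  finally show ?thesis unfolding shift_row_def by simp
qed

lemma sigma_key:
  assumes n: "0 < n" and I: "I \<subseteq> {0..<n}"
  shows "(\<lambda>j. (j + r) mod n) ` I \<in> resolved_sets n (circ_matrix n h (k + r)) \<sigma>
     \<longleftrightarrow> I \<in> resolved_sets n (circ_matrix n h k) \<sigma>"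
proof -
  let ?f = "\<lambda>j. (j + r) mod n"
  have inj: "inj_on ?f {0..<n}" using shift_bij[OF n] by (simp add: bij_betw_def)
  have injI: "inj_on ?f I" using inj I inj_on_subset by blast
  have sub: "?f ` I \<subseteq> {0..<n}" using n by auto
  have c1: "card (?f ` I) = card I" using injI by (simp add: card_image)
  have e: "{j \<in> ?f ` I. circ_matrix n h (k + r) j} = ?f ` {j \<in> I. circ_matrix n h k j}"
    using shift_row_shift[OF n] unfolding circ_matrix_def by auto
  have c2: "card (?f ` {j \<in> I. circ_matrix n h k j}) = card {j \<in> I. circ_matrix n h k j}"
    by (rule card_image, rule inj_on_subset[OF injI]) auto
  have "card {j \<in> ?f ` I. circ_matrix n h (k + r) j} = card {j \<in> I. circ_matrix n h k j}"
    using e c2 by simp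
  then show ?thesis unfolding resolved_sets_def resolves_def using sub c1 I by simp
qed

lemma sigma_shift:
  assumes n: "0 < n"
  shows "resolved_sets n (circ_matrix n h (k + r)) \<sigma>
     = image (\<lambda>j. (j + r) mod n) ` resolved_sets n (circ_matrix n h k) \<sigma>"
proof
  let ?f = "\<lambda>j. (j + r) mod n"
  have bp: "bij_betw (image ?f) (Pow {0..<n}) (Pow {0..<n})"
    using bij_betw_image_Pow[OF shift_bij[OF n]] .
  show "image ?f ` resolved_sets n (circ_matrix n h k) \<sigma> \<subseteq> resolved_sets n (circ_matrix n h (k + r)) \<sigma>"
  proof (rule image_subsetI)
    fix I assume I: "I \<in> resolved_sets n (circ_matrix n h k) \<sigma>"
    then have "I \<subseteq> {0..<n}" unfolding resolved_sets_def by auto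
    then show "?f ` I \<in> resolved_sets n (circ_matrix n h (k + r)) \<sigma>" using sigma_key[OF n] I by blast
  qed
  show "resolved_sets n (circ_matrix n h (k + r)) \<sigma> \<subseteq> image ?f ` resolved_sets n (circ_matrix n h k) \<sigma>"
  proof
    fix J assume J: "J \<in> resolved_sets n (circ_matrix n h (k + r)) \<sigma>"
    then have "J \<in> Pow {0..<n}" unfolding resolved_sets_def by auto
    then have "J \<in> image ?f ` Pow {0..<n}" using bp unfolding bij_betw_def by simp
    then obtain I where I: "I \<in> Pow {0..<n}" "J = ?f ` I" by (rule imageE) blast
    then show "J \<in> image ?f ` resolved_sets n (circ_matrix n h k) \<sigma>" using sigma_key[OF n, of I] J by auto
  qed
qed

lemma sum_ind:
  assumes "finite U" "B \<subseteq> U"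
  shows "(\<Sum>x\<in>U. if x \<in> B then 1 else 0::real) = real (card B)"
proof -
  have "(\<Sum>x\<in>U. if x \<in> B then 1 else 0::real) = (\<Sum>x\<in>{x\<in>U. x \<in> B}. 1)"
    using sum.inter_filter[OF assms(1), of "\<lambda>_. 1::real" "\<lambda>x. x \<in> B"] by simp
  also have "{x\<in>U. x \<in> B} = B" using assms(2) by auto
  finally show ?thesis by simp
qed

lemma sq_ind:
  fixes f :: "nat \<Rightarrow> real"
  assumes "\<And>r. f r = 0 \<or> f r = 1"
  shows "(\<Sum>r<m. f r)^2 = (\<Sum>r<m. f r) + 2 * (\<Sum>b<m. \<Sum>a<b. f a * f b)"
proof (induction m)
  case 0 then show ?case by simp
next
  case (Suc m)
  have ff: "f m * f m = f m" using assms[of m] by auto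
  have "(\<Sum>r<Suc m. f r)^2 = (\<Sum>r<m. f r)^2 + 2 * (\<Sum>r<m. f r) * f m + f m * f m"
    by (simp add: power2_eq_square algebra_simps)
  also have "\<dots> = (\<Sum>r<m. f r) + 2 * (\<Sum>b<m. \<Sum>a<b. f a * f b) + 2 * (\<Sum>a<m. f a * f m) + f m"
  proof -
    have d: "(\<Sum>r<m. f r) * f m = (\<Sum>a<m. f a * f m)" by (simp add: sum_distrib_right)
    have d2: "2 * (\<Sum>r<m. f r) * f m = 2 * (\<Sum>a<m. f a * f m)" using d by simp
    show ?thesis using Suc.IH ff d2 by linarith
  qed
  finally show ?case by (simp add: algebra_simps)
qed

lemma count_bound:
  fixes A :: "nat \<Rightarrow> 'a set" and m :: nat
  assumes fin: "finite (\<Union>r<m. A r)" and m: "1 \<le> m"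
  shows "real (card (\<Union>r<m. A r)) \<le> (\<Sum>r<m. real (card (A r)))
          - 2 / real m * (\<Sum>b<m. \<Sum>a<b. real (card (A a \<inter> A b)))"
proof -
  define U where "U = (\<Union>r<m. A r)"
  define i where "i = (\<lambda>r x. if x \<in> A r then 1 else (0::real))"
  define N where "N = (\<lambda>x. \<Sum>r<m. i r x)"
  define Q where "Q = (\<lambda>x. \<Sum>b<m. \<Sum>a<b. i a x * i b x)"
  have finU: "finite U" using fin U_def by simp
  have AU: "\<And>r. r < m \<Longrightarrow> A r \<subseteq> U" unfolding U_def by auto
  have pt: "1 \<le> N x - 2 / real m * Q x" if x: "x \<in> U" for x
  proof -
    have sq: "(N x)^2 = N x + 2 * Q x" unfolding N_def Q_def by (rule sq_ind) (simp add: i_def)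
    obtain r where r: "r < m" "x \<in> A r" using x U_def by auto
    have "i r x \<le> N x" unfolding N_def
      by (rule member_le_sum) (use r in \<open>auto simp: i_def\<close>)
    then have N1: "1 \<le> N x" using r by (simp add: i_def)
    have "N x \<le> (\<Sum>r<m. 1)" unfolding N_def by (rule sum_mono) (simp add: i_def)
    then have Nm: "N x \<le> real m" by simp
    have "0 \<le> (N x - 1) * (real m - N x)" using N1 Nm by simp
    then have "real m \<le> real m * N x - (N x)^2 + N x" by (simp add: algebra_simps power2_eq_square)
    then have "real m \<le> real m * N x - 2 * Q x" using sq by simp
    then have "real m * 1 \<le> real m * (N x - 2 / real m * Q x)" using m by (simp add: algebra_simps)
    then show ?thesis using m by simp
  qed
  have "real (card U) = (\<Sum>x\<in>U. 1)" by simp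
  also have "\<dots> \<le> (\<Sum>x\<in>U. N x - 2 / real m * Q x)" by (rule sum_mono) (use pt in auto)
  also have "\<dots> = (\<Sum>x\<in>U. N x) - 2 / real m * (\<Sum>x\<in>U. Q x)"
    by (simp add: sum_subtractf sum_distrib_left)
  also have "(\<Sum>x\<in>U. N x) = (\<Sum>r<m. real (card (A r)))"
  proof -
    have "(\<Sum>x\<in>U. N x) = (\<Sum>r<m. \<Sum>x\<in>U. i r x)" unfolding N_def by (rule sum.swap)
    also have "\<dots> = (\<Sum>r<m. real (card (A r)))"
      by (rule sum.cong) (auto simp: i_def intro!: sum_ind finU AU)
    finally show ?thesis .
  qed
  also have "(\<Sum>x\<in>U. Q x) = (\<Sum>b<m. \<Sum>a<b. real (card (A a \<inter> A b)))"
  proof -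
    have "(\<Sum>x\<in>U. Q x) = (\<Sum>b<m. \<Sum>x\<in>U. \<Sum>a<b. i a x * i b x)" unfolding Q_def by (rule sum.swap)
    also have "\<dots> = (\<Sum>b<m. \<Sum>a<b. \<Sum>x\<in>U. i a x * i b x)" by (simp add: sum.swap[of _ U])
    also have "\<dots> = (\<Sum>b<m. \<Sum>a<b. real (card (A a \<inter> A b)))"
    proof (rule sum.cong[OF refl], rule sum.cong[OF refl])
      fix b a assume b: "b \<in> {..<m}" and a: "a \<in> {..<b}"
      have "(\<Sum>x\<in>U. i a x * i b x) = (\<Sum>x\<in>U. if x \<in> A a \<inter> A b then 1 else 0)"
        by (rule sum.cong) (auto simp: i_def)
      also have "\<dots> = real (card (A a \<inter> A b))"
        by (rule sum_ind[OF finU]) (use AU a b in auto)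
      finally show "(\<Sum>x\<in>U. i a x * i b x) = real (card (A a \<inter> A b))" .
    qed
    finally show ?thesis .
  qed
  finally show ?thesis unfolding U_def .
qed

lemma reindex_pairs:
  fixes c :: "nat \<Rightarrow> real"
  shows "(\<Sum>b<m. \<Sum>a<b. c (b - a)) = (\<Sum>\<kappa>\<in>{1..<m}. real (m - \<kappa>) * c \<kappa>)"
proof (induction m)
  case 0 then show ?case by simp
next
  case (Suc m)
  have r: "(\<Sum>a<m. c (m - a)) = (\<Sum>\<kappa>\<in>{1..<Suc m}. c \<kappa>)"
    by (rule sum.reindex_bij_witness[of _ "\<lambda>\<kappa>. m - \<kappa>" "\<lambda>a. m - a"]) auto
  have s: "(\<Sum>\<kappa>\<in>{1..<Suc m}. real (Suc m - \<kappa>) * c \<kappa>)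
      = (\<Sum>\<kappa>\<in>{1..<Suc m}. real (m - \<kappa>) * c \<kappa>) + (\<Sum>\<kappa>\<in>{1..<Suc m}. c \<kappa>)"
    by (simp add: sum.distrib[symmetric] Suc_diff_le of_nat_Suc algebra_simps)
  have t: "(\<Sum>\<kappa>\<in>{1..<Suc m}. real (m - \<kappa>) * c \<kappa>) = (\<Sum>\<kappa>\<in>{1..<m}. real (m - \<kappa>) * c \<kappa>)"
    by (cases m) (simp_all)
  show ?case using Suc r s t by simp
qed

theorem mainTheorem7:
  fixes n m \<sigma> :: nat and h :: "nat \<Rightarrow> bool"
  assumes "1 \<le> m" and "m \<le> n" and "1 \<le> \<sigma>" and "\<sigma> \<le> n"
  defines "\<Sigma> \<equiv> \<lambda>r. resolved_sets n (circ_matrix n h r) \<sigma>"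
  shows "real (card (\<Union>r<m. \<Sigma> r))
    \<le> real m * real (card (\<Sigma> 0))
       - 2 / real m * (\<Sum>\<kappa>=1..m-1. real (m - \<kappa>) * real (card (\<Sigma> 0 \<inter> \<Sigma> \<kappa>)))"
proof -
  have n: "0 < n" using assms by simp
  define g where "g = (\<lambda>r. image (\<lambda>j. (j + r) mod n))"
  have sh: "\<Sigma> (k + r) = g r ` \<Sigma> k" for k r
    unfolding \<Sigma>_def g_def by (rule sigma_shift[OF n])
  have pow: "\<Sigma> k \<subseteq> Pow {0..<n}" for k unfolding \<Sigma>_def resolved_sets_def by auto
  have inj: "inj_on (g r) (Pow {0..<n})" for r
    unfolding g_def using shift_bij[OF n, of r] by (intro inj_on_image_Pow) (simp add: bij_betw_def)
  have c1: "card (\<Sigma> r) = card (\<Sigma> 0)" for r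
  proof -
    have "\<Sigma> r = g r ` \<Sigma> 0" using sh[of 0 r] by simp
    moreover have "inj_on (g r) (\<Sigma> 0)" by (rule inj_on_subset[OF inj[of r] pow[of 0]])
    ultimately show ?thesis by (simp add: card_image)
  qed
  have c2: "card (\<Sigma> a \<inter> \<Sigma> b) = card (\<Sigma> 0 \<inter> \<Sigma> (b - a))" if "a < b" for a b
  proof -
    have ea: "\<Sigma> a = g a ` \<Sigma> 0" using sh[of 0 a] by simp
    have eb: "\<Sigma> b = g a ` \<Sigma> (b - a)" using sh[of "b - a" a] that by simp
    have "\<Sigma> a \<inter> \<Sigma> b = g a ` (\<Sigma> 0 \<inter> \<Sigma> (b - a))"
      unfolding ea eb by (rule inj_on_image_Int[OF inj[of a] pow[of 0] pow[of "b - a"], symmetric])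
    moreover have "inj_on (g a) (\<Sigma> 0 \<inter> \<Sigma> (b - a))" by (rule inj_on_subset[OF inj[of a]]) (use pow[of 0] in auto)
    ultimately show ?thesis by (simp add: card_image)
  qed
  have fin: "finite (\<Union>r<m. \<Sigma> r)"
    by (rule finite_subset[of _ "Pow {0..<n}"]) (use pow in auto)
  note cb = count_bound[OF fin assms(1)]
  have s1: "(\<Sum>r<m. real (card (\<Sigma> r))) = real m * real (card (\<Sigma> 0))"
  proof -
    have "(\<Sum>r<m. real (card (\<Sigma> r))) = (\<Sum>r<m. real (card (\<Sigma> 0)))"
      by (rule sum.cong[OF refl]) (rule arg_cong[of _ _ real], rule c1)
    then show ?thesis by simp
  qed
  have s2: "(\<Sum>b<m. \<Sum>a<b. real (card (\<Sigma> a \<inter> \<Sigma> b)))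
      = (\<Sum>b<m. \<Sum>a<b. real (card (\<Sigma> 0 \<inter> \<Sigma> (b - a))))"
  proof (rule sum.cong[OF refl], rule sum.cong[OF refl])
    fix b a assume "b \<in> {..<m}" "a \<in> {..<b}"
    then have "a < b" by simp
    from c2[OF this] show "real (card (\<Sigma> a \<inter> \<Sigma> b)) = real (card (\<Sigma> 0 \<inter> \<Sigma> (b - a)))" by (rule arg_cong)
  qed
  have s3: "(\<Sum>b<m. \<Sum>a<b. real (card (\<Sigma> 0 \<inter> \<Sigma> (b - a))))
      = (\<Sum>\<kappa>=1..m-1. real (m - \<kappa>) * real (card (\<Sigma> 0 \<inter> \<Sigma> \<kappa>)))"
  proof -
    have "{1..m-1} = {1..<m}" using assms(1) by auto
    then show ?thesis using reindex_pairs[of "\<lambda>\<kappa>. real (card (\<Sigma> 0 \<inter> \<Sigma> \<kappa>))" m] by simp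
  qed
  show ?thesis using cb by (simp only: s1 s2 s3)
qed

end
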